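(* Let $l,d,t>0$ and $R_{t,d,l}(z)=t+(2l+2d-t)z+(2l-2d-t)z^2+tz^3$. (1) $R_{t,d,l}$ has two (non-real) complex conjugate roots if and only if $l\,q_1(t,l)<d<l\,q_2(t,l)$. (2) If $z_0$ denotes a non-real root of $R_{t,d,l}$ in the upper half plane (when it exists), then $|z_0|>1$. (3) If $d\ge l\,q_2(t,l)$ and $z_{\max}$ denotes the largest real root of $R_{t,d,l}$, then $z_{\max}>1$. (4) If $d\le l\,q_1(t,l)$ and $z_{\min}$ denotes the smallest real root of $R_{t,d,l}$, then $z_{\min}<-1$.
   Context: $q_2(t,l)=\sqrt{-\frac{t^2}{2l^2}+\frac{5t}{l}+1+\frac12\frac{t^2}{l^2}\bigl(1+\frac{4l}{t}\bigr)^{3/2}}$, and $q_1(t,l)=\sqrt{-\frac{t^2}{2l^2}+\frac{5t}{l}+1-\frac12\frac{t^2}{l^2}\bigl(1+\frac{4l}{t}\bigr)^{3/2}}$ if $0\le t/l<\frac12$, while $q_1(t,l)=0$ if $t/l\ge\frac12$. *)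

theory Defs
  imports Complex_Main
begin

definition q2 :: "real \<Rightarrow> real \<Rightarrow> real" where
  "q2 t l = sqrt (- (t^2 / (2 * l^2)) + 5 * t / l + 1
                  + (1/2) * (t^2 / l^2) * (1 + 4 * l / t) powr (3/2))"

definition q1 :: "real \<Rightarrow> real \<Rightarrow> real" where
  "q1 t l = (if 0 \<le> t / l \<and> t / l < 1/2
             then sqrt (- (t^2 / (2 * l^2)) + 5 * t / l + 1
                        - (1/2) * (t^2 / l^2) * (1 + 4 * l / t) powr (3/2))
             else 0)"

definition Rtdl :: "real \<Rightarrow> real \<Rightarrow> real \<Rightarrow> 'a::real_algebra_1 \<Rightarrow> 'a" where
  "Rtdl t d l z = of_real t + of_real (2*l + 2*d - t) * z
                  + of_real (2*l - 2*d - t) * z^2 + of_real t * z^3"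

end

theory Submission
  imports Defs
begin

definition disc3 :: "real \<Rightarrow> real \<Rightarrow> real \<Rightarrow> real \<Rightarrow> real" where
 "disc3 a b c d = 18*a*b*c*d - 4*b^3*d + b^2*c^2 - 4*a*c^3 - 27*a^2*d^2"

lemma disc_id: "disc3 a (p-a*r) (q-p*r) (-q*r) = (p^2-4*a*q)*(a*r^2+p*r+q)^2"
  unfolding disc3_def by algebra

lemma disc_id2: "disc3 t (2-2*d-t) (2+2*d-t) t = 16*((d^2-(-(t^2/2)+5*t+1))^2 - t*(t+4)^3/4)"
  unfolding disc3_def by (simp add: algebra_simps power2_eq_square power3_eq_cube)

lemma WP: "(t::real)*(t+4)^3/4 - (-(t^2/2)+5*t+1)^2 = (2*t-1)^(3::nat)"
  by (simp add: field_simps power2_eq_square power3_eq_cube)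

lemma Rform:
  fixes z :: "'a::real_algebra_1"
  assumes "t = l*\<tau>" "d = l*\<delta>"
  shows "Rtdl t d l z = of_real l * (of_real \<tau> + of_real (2+2*\<delta>-\<tau>) * z
           + of_real (2-2*\<delta>-\<tau>) * z^2 + of_real \<tau> * z^3)"
proof -
  have "2*l + 2*d - t = l*(2+2*\<delta>-\<tau>)" "2*l - 2*d - t = l*(2-2*\<delta>-\<tau>)"
    using assms by (simp_all add: algebra_simps)
  then show ?thesis unfolding Rtdl_def using assms
    by (simp add: of_real_mult distrib_left mult.assoc)
qed

lemma factor:
  fixes z :: "'a::{comm_ring_1,real_algebra_1}"
  assumes "b = p - \<tau>*r" "c = q - p*r" "\<tau> = -q*r"
  shows "of_real \<tau> + of_real c * z + of_real b * z^2 + of_real \<tau> * z^3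
       = (z - of_real r) * (of_real \<tau> * z^2 + of_real p * z + of_real q)"
proof -
  have "of_real \<tau> + of_real c * z + of_real b * z^2 + of_real \<tau> * z^3
     = of_real (-q*r) + of_real (q - p*r) * z + of_real (p - \<tau>*r) * z^2 + of_real \<tau> * z^3"
    using assms by simp
  also have "\<dots> = (z - of_real r) * (of_real \<tau> * z^2 + of_real p * z + of_real q)"
    by (simp add: of_real_mult of_real_diff algebra_simps power2_eq_square power3_eq_cube)
  finally show ?thesis .
qed

lemma quad_root_complex:
  fixes a p q x y :: real
  assumes "a > 0" "y \<noteq> 0"
  shows "(of_real a * (Complex x y)^2 + of_real p * Complex x y + of_real q = 0)
         \<longleftrightarrow> (p = -2*a*x \<and> q = a*(x^2+y^2))"
proof -
  have "(of_real a * (Complex x y)^2 + of_real p * Complex x y + of_real q = 0)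
     \<longleftrightarrow> (a*(x*x-y*y) + p*x + q = 0 \<and> y*(2*a*x+p) = 0)"
    by (simp add: complex_eq_iff power2_eq_square algebra_simps)
  also have "\<dots> \<longleftrightarrow> (a*(x*x-y*y) + p*x + q = 0 \<and> p = -2*a*x)"
    using assms(2) by auto
  also have "\<dots> \<longleftrightarrow> (p = -2*a*x \<and> q = a*(x^2+y^2))"
    by (auto simp: algebra_simps power2_eq_square)
  finally show ?thesis .
qed

lemma lt_sqrt_iff: "(0::real) < x \<Longrightarrow> x < sqrt y \<longleftrightarrow> x^2 < y"
proof -
  assume x: "0 < x"
  have "x = sqrt (x^2)" using x by simp
  then have "x < sqrt y \<longleftrightarrow> sqrt (x^2) < sqrt y" by simp
  also have "\<dots> \<longleftrightarrow> x^2 < y" by (rule real_sqrt_less_iff)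
  finally show ?thesis .
qed

lemma sqrt_lt_iff: "(0::real) < x \<Longrightarrow> sqrt y < x \<longleftrightarrow> y < x^2"
proof -
  assume x: "0 < x"
  have "x = sqrt (x^2)" using x by simp
  then have "sqrt y < x \<longleftrightarrow> sqrt y < sqrt (x^2)" by simp
  also have "\<dots> \<longleftrightarrow> y < x^2" by (rule real_sqrt_less_iff)
  finally show ?thesis .
qed

theorem proposition5p1:
  fixes t d l :: real
  assumes "l > 0" and "d > 0" and "t > 0"
  shows "((\<exists>z::complex. Im z \<noteq> 0 \<and> Rtdl t d l z = 0) \<longleftrightarrow>
            (l * q1 t l < d \<and> d < l * q2 t l))
       \<and> (\<forall>z0::complex. Im z0 > 0 \<and> Rtdl t d l z0 = 0 \<longrightarrow> cmod z0 > 1)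
       \<and> (d \<ge> l * q2 t l \<longrightarrow> Max {z::real. Rtdl t d l z = 0} > 1)
       \<and> (d \<le> l * q1 t l \<longrightarrow> Min {z::real. Rtdl t d l z = 0} < -1)"
proof -
  define \<tau> where "\<tau> = t/l"
  define \<delta> where "\<delta> = d/l"
  have tp: "\<tau> > 0" "\<delta> > 0" using assms by (simp_all add: \<tau>_def \<delta>_def)
  have t_eq: "t = l*\<tau>" and d_eq: "d = l*\<delta>" using assms by (simp_all add: \<tau>_def \<delta>_def)
  define P where "P = -(\<tau>^2/2) + 5*\<tau> + 1"
  define W where "W = \<tau>*(\<tau>+4)/2 * sqrt(1+4/\<tau>)"
  have W0: "W \<ge> 0" unfolding W_def using tp by simp
  have W2: "W^2 = \<tau>*(\<tau>+4)^3/4"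
  proof -
    have "W^2 = (\<tau>*(\<tau>+4)/2)^2 * sqrt(1+4/\<tau>)^2" unfolding W_def
      by (simp only: power_mult_distrib)
    also have "\<dots> = (\<tau>*(\<tau>+4)/2)^2 * (1+4/\<tau>)" using tp by simp
    also have "\<dots> = \<tau>*(\<tau>+4)^3/4" using tp by (simp add: field_simps power2_eq_square power3_eq_cube)
    finally show ?thesis .
  qed
  have WP2: "W^2 - P^2 = (2*\<tau>-1)^3" using WP[of \<tau>] W2 unfolding P_def by simp
  have pw: "(1 + 4*l/t) powr (3/2) = (1+4/\<tau>) * sqrt(1+4/\<tau>)"
  proof -
    have e: "1 + 4*l/t = 1+4/\<tau>" using assms by (simp add: \<tau>_def)
    have pos: "1+4/\<tau> > 0" using tp by (simp add: add_pos_pos)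
    have "(1+4/\<tau>) powr (3/2) = (1+4/\<tau>) powr 1 * (1+4/\<tau>) powr (1/2)"
      by (subst powr_add[symmetric]) simp
    also have "\<dots> = (1+4/\<tau>) * (1+4/\<tau>) powr (1/2)" using pos by simp
    also have "\<dots> = (1+4/\<tau>) * sqrt(1+4/\<tau>)" using pos by (simp add: powr_half_sqrt)
    finally show ?thesis using e by simp
  qed
  have Wt: "(1/2) * (t^2 / l^2) * (1 + 4 * l / t) powr (3/2) = W"
    unfolding pw W_def using assms tp by (simp add: t_eq field_simps power2_eq_square)
  have Pt: "- (t^2 / (2 * l^2)) + 5 * t / l + 1 = P"
    unfolding P_def using assms by (simp add: t_eq field_simps power2_eq_square)
  have q2eq: "q2 t l = sqrt(P+W)" unfolding q2_def using Wt Pt by simp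
  have q1eq: "q1 t l = (if \<tau> < 1/2 then sqrt(P-W) else 0)"
    unfolding q1_def using Wt Pt tp by (simp add: \<tau>_def[symmetric])
  define b where "b = 2-2*\<delta>-\<tau>"
  define c where "c = 2+2*\<delta>-\<tau>"
  have RC: "Rtdl t d l z = of_real l * (of_real \<tau> + of_real c * z + of_real b * z^2 + of_real \<tau> * z^3)"
    for z :: complex unfolding b_def c_def by (rule Rform[OF t_eq d_eq])
  define g where "g x = \<tau> + c*x + b*x^2 + \<tau>*x^3" for x::real
  have RR: "Rtdl t d l x = l * g x" for x :: real
    unfolding g_def b_def c_def using Rform[OF t_eq d_eq, of x] by simp
  obtain r where r: "-1 < r" "r < 0" "g r = 0"
  proof -
    have "\<exists>x\<ge>-1. x \<le> 0 \<and> g x = 0"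
      by (rule IVT) (use tp in \<open>auto simp: g_def b_def c_def\<close>)
    then obtain x where x: "-1 \<le> x" "x \<le> 0" "g x = 0" by blast
    have "x \<noteq> -1" using x tp by (auto simp: g_def b_def c_def)
    moreover have "x \<noteq> 0" using x tp by (auto simp: g_def)
    ultimately show ?thesis using that x by force
  qed
  define p where "p = b + \<tau>*r"
  define q where "q = -\<tau>/r"
  have rel: "b = p - \<tau>*r" "c = q - p*r" "\<tau> = -q*r"
  proof -
    show "b = p - \<tau>*r" by (simp add: p_def)
    show "\<tau> = -q*r" using r by (simp add: q_def)
    have "c*r = -\<tau> - b*r^2 - \<tau>*r^3" using r(3) by (simp add: g_def algebra_simps)
    then have "c = (-\<tau> - b*r^2 - \<tau>*r^3)/r" using r by (simp add: field_simps)
    then show "c = q - p*r" using r by (simp add: p_def q_def field_simps power2_eq_square power3_eq_cube)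
  qed
  have facC: "Rtdl t d l z = of_real l * ((z - of_real r) * (of_real \<tau> * z^2 + of_real p * z + of_real q))"
    for z :: complex using RC[of z] factor[OF rel, of z] by simp
  have facR: "g x = (x - r) * (\<tau> * x^2 + p * x + q)" for x :: real
    using factor[OF rel, of x] by (simp add: g_def)
  define D where "D = p^2 - 4*\<tau>*q"
  have key: "D*(\<tau>*r^2+p*r+q)^2 = 16*((\<delta>^2-P)^2 - W^2)"
    using disc_id[of \<tau> p r q] disc_id2[of \<tau> \<delta>] rel W2
    unfolding D_def P_def b_def c_def by simp
  have qgt: "q > \<tau>"
  proof -
    have "q*(-r) = \<tau>" using rel by simp
    moreover have "0 < -r" using r by simp
    ultimately have qp: "q > 0" using tp zero_less_mult_iff[of q "-r"] by auto
    have "q*(-r) < q*1" using qp r by (intro mult_strict_left_mono) auto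
    then show ?thesis using \<open>q*(-r) = \<tau>\<close> by simp
  qed
  have Qz: "of_real \<tau> * z^2 + of_real p * z + of_real q = 0"
    if "Im z \<noteq> 0" "Rtdl t d l z = 0" for z :: complex
  proof -
    have "z \<noteq> of_real r" using that(1) by auto
    then show ?thesis using that(2) facC[of z] assms by simp
  qed
  have E1: "(\<exists>z::complex. Im z \<noteq> 0 \<and> Rtdl t d l z = 0) \<longleftrightarrow> D < 0"
  proof
    assume "\<exists>z::complex. Im z \<noteq> 0 \<and> Rtdl t d l z = 0"
    then obtain z :: complex where z: "Im z \<noteq> 0" "Rtdl t d l z = 0" by blast
    obtain x y where xy: "z = Complex x y" by (cases z)
    have y: "y \<noteq> 0" using z xy by simp
    have "p = -2*\<tau>*x \<and> q = \<tau>*(x^2+y^2)"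
      using Qz[OF z] quad_root_complex[of \<tau> y x p q, OF tp(1) y] xy by simp
    then have "D = -4*\<tau>^2*y^2" unfolding D_def by (simp add: algebra_simps power2_eq_square)
    then show "D < 0" using y tp by simp
  next
    assume D: "D < 0"
    define x where "x = -p/(2*\<tau>)"
    define y where "y = sqrt(-D)/(2*\<tau>)"
    have y: "y \<noteq> 0" using D tp by (simp add: y_def)
    have y2: "y^2 = -D/(4*\<tau>^2)" using D tp by (simp add: y_def power_divide)
    have "p = -2*\<tau>*x \<and> q = \<tau>*(x^2+y^2)"
      using tp unfolding y2 x_def D_def by (simp add: field_simps power2_eq_square)
    then have "of_real \<tau> * (Complex x y)^2 + of_real p * Complex x y + of_real q = 0"
      using quad_root_complex[of \<tau> y x p q, OF tp(1) y] by simp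
    then have "Rtdl t d l (Complex x y) = 0" using facC by simp
    then show "\<exists>z::complex. Im z \<noteq> 0 \<and> Rtdl t d l z = 0" using y by (intro exI[of _ "Complex x y"]) simp
  qed
  have part2: "\<forall>z0::complex. Im z0 > 0 \<and> Rtdl t d l z0 = 0 \<longrightarrow> cmod z0 > 1"
  proof (intro allI impI)
    fix z :: complex assume z: "Im z > 0 \<and> Rtdl t d l z = 0"
    obtain x y where xy: "z = Complex x y" by (cases z)
    have y: "y \<noteq> 0" using z xy by simp
    have "p = -2*\<tau>*x \<and> q = \<tau>*(x^2+y^2)"
      using Qz[of z] z quad_root_complex[of \<tau> y x p q, OF tp(1) y] xy by simp
    then have "\<tau>*(cmod z)^2 = q" using xy by (simp add: cmod_def)
    then have "\<tau>*(cmod z)^2 > \<tau>*1" using qgt by simp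
    then have "(cmod z)^2 > 1^2" using tp by simp
    then show "cmod z > 1" using power_less_imp_less_base by fastforce
  qed
  define Qr where "Qr = \<tau>*r^2+p*r+q"
  have Qr4: "4*\<tau>*Qr = (2*\<tau>*r+p)^2 - D" unfolding Qr_def D_def by (simp add: algebra_simps power2_eq_square)
  have F: "(\<delta>^2-P)^2 - W^2 = (\<delta>^2-P-W)*(\<delta>^2-P+W)" by (simp add: algebra_simps power2_eq_square)
  have Fneg: "(\<delta>^2-P)^2 - W^2 < 0 \<longleftrightarrow> (P-W < \<delta>^2 \<and> \<delta>^2 < P+W)"
    unfolding F mult_less_0_iff using W0 by auto
  have key': "D*Qr^2 = 16*((\<delta>^2-P)^2 - W^2)" using key unfolding Qr_def .
  have E2: "D < 0 \<longleftrightarrow> (P-W < \<delta>^2 \<and> \<delta>^2 < P+W)"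
  proof
    assume D: "D < 0"
    have "4*\<tau>*Qr > 0" using Qr4 D by (smt (verit) zero_le_power2)
    then have "Qr \<noteq> 0" by auto
    then have "Qr^2 > 0" by simp
    then have "D*Qr^2 < 0" using D by (simp add: mult_neg_pos)
    then show "P-W < \<delta>^2 \<and> \<delta>^2 < P+W" using key' Fneg by simp
  next
    assume "P-W < \<delta>^2 \<and> \<delta>^2 < P+W"
    then have "D*Qr^2 < 0" using key' Fneg by simp
    then show "D < 0" by (smt (verit) zero_le_power2 mult_nonneg_nonneg)
  qed
  have PW: "\<tau> \<ge> 1/2 \<Longrightarrow> P \<le> W"
  proof -
    assume h: "\<tau> \<ge> 1/2"
    have "(2*\<tau>-1)^3 \<ge> 0" using h by simp
    then have "P^2 \<le> W^2" using WP2 by linarith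
    then show "P \<le> W" using W0 by (smt (verit) power2_le_imp_le)
  qed
  have E3: "(l * q1 t l < d \<and> d < l * q2 t l) \<longleftrightarrow> (P-W < \<delta>^2 \<and> \<delta>^2 < P+W)"
  proof -
    have a: "l * q1 t l < d \<longleftrightarrow> q1 t l < \<delta>" using assms(1) by (simp add: d_eq)
    have b: "d < l * q2 t l \<longleftrightarrow> \<delta> < q2 t l" using assms(1) by (simp add: d_eq)
    have b2: "\<delta> < q2 t l \<longleftrightarrow> \<delta>^2 < P+W" unfolding q2eq using lt_sqrt_iff[OF tp(2)] .
    have a2: "q1 t l < \<delta> \<longleftrightarrow> P-W < \<delta>^2"
    proof (cases "\<tau> < 1/2")
      case True
      then show ?thesis unfolding q1eq using sqrt_lt_iff[OF tp(2)] by simp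
    next
      case False
      then have "P - W \<le> 0" using PW by simp
      moreover have "\<delta>^2 > 0" using tp by simp
      ultimately have "P - W < \<delta>^2" by linarith
      moreover have "q1 t l = 0" unfolding q1eq using False by simp
      ultimately show ?thesis using tp by simp
    qed
    show ?thesis using a b a2 b2 by blast
  qed
  have part1: "(\<exists>z::complex. Im z \<noteq> 0 \<and> Rtdl t d l z = 0) \<longleftrightarrow> (l * q1 t l < d \<and> d < l * q2 t l)"
    using E1 E2 E3 by simp
  define sD where "sD = sqrt D"
  define r2 where "r2 = (-p-sD)/(2*\<tau>)"
  define r3 where "r3 = (-p+sD)/(2*\<tau>)"
  have roots: "finite {z::real. Rtdl t d l z = 0} \<and> {z::real. Rtdl t d l z = 0} = {r, r2, r3}
      \<and> r2 \<le> r3 \<and> r2*r3 > 1 \<and> r2 + r3 = -p/\<tau>" if Dn: "D \<ge> 0"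
  proof -
    have s2: "sD^2 = D" unfolding sD_def using Dn by simp
    have s0: "sD \<ge> 0" using Dn by (simp add: sD_def)
    have Qf: "\<tau>*x^2+p*x+q = \<tau>*(x-r2)*(x-r3)" for x
    proof -
      have "4*\<tau>*(\<tau>*(x-r2)*(x-r3)) = (2*\<tau>*x+p)^2 - sD^2"
        using tp unfolding r2_def r3_def by (simp add: field_simps power2_eq_square)
      also have "\<dots> = 4*\<tau>*(\<tau>*x^2+p*x+q)" unfolding s2 D_def by (simp add: algebra_simps power2_eq_square)
      finally show ?thesis using tp by simp
    qed
    have set: "{z::real. Rtdl t d l z = 0} = {r, r2, r3}"
      using assms(1) tp by (auto simp: RR facR Qf)
    have prod: "r2*r3 = q/\<tau>"
    proof -
      have "4*\<tau>^2*(r2*r3) = p^2 - sD^2" using tp unfolding r2_def r3_def by (simp add: field_simps power2_eq_square)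
      also have "\<dots> = 4*\<tau>*q" unfolding s2 D_def by simp
      finally show ?thesis using tp by (simp add: field_simps power2_eq_square)
    qed
    have "q/\<tau> > 1" using qgt tp by simp
    moreover have "r2 \<le> r3" using s0 tp unfolding r2_def r3_def by (simp add: divide_right_mono)
    moreover have "r2 + r3 = -p/\<tau>" using tp unfolding r2_def r3_def by (simp add: field_simps)
    ultimately show ?thesis using set prod by simp
  qed
  have part3: "d \<ge> l * q2 t l \<longrightarrow> Max {z::real. Rtdl t d l z = 0} > 1"
  proof
    assume h: "d \<ge> l * q2 t l"
    then have D: "D \<ge> 0" using E2 E3 by linarith
    have "\<not> \<delta> < q2 t l" using h assms(1) by (simp add: d_eq)
    then have d2: "\<delta>^2 \<ge> P+W" unfolding q2eq using lt_sqrt_iff[OF tp(2)] by simp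
    have bneg: "b < 0"
    proof (cases "\<tau> \<ge> 2")
      case True then show ?thesis using tp by (simp add: b_def)
    next
      case False
      have "P - ((2-\<tau>)/2)^2 = \<tau>*(6 - 3*\<tau>/4)" unfolding P_def by (simp add: field_simps power2_eq_square)
      also have "\<dots> > 0" using tp False by simp
      finally have "\<delta>^2 > ((2-\<tau>)/2)^2" using d2 W0 by simp
      then have "\<delta> > (2-\<tau>)/2" using tp by (smt (verit) power_mono)
      then show ?thesis by (simp add: b_def)
    qed
    have pneg: "p < 0" unfolding p_def using bneg tp r by (smt (verit) mult_pos_neg)
    obtain fin: "finite {z::real. Rtdl t d l z = 0}" and set: "{z::real. Rtdl t d l z = 0} = {r, r2, r3}"
      and le: "r2 \<le> r3" and pr: "r2*r3 > 1" and sm: "r2 + r3 = -p/\<tau>" using roots[OF D] by blast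
    have "r2 + r3 > 0" using sm pneg tp by (simp add: divide_neg_pos)
    then have r3p: "r3 > 0" using le by simp
    have r3g: "r3 > 1"
    proof (rule ccontr)
      assume "\<not> r3 > 1"
      then have r31: "r3 \<le> 1" by simp
      have "r2 > 0" using pr r3p by (smt (verit) mult_nonpos_nonneg)
      then have "r2*r3 \<le> 1*1" using le r31 by (intro mult_mono) auto
      then show False using pr by simp
    qed
    have "Max {z::real. Rtdl t d l z = 0} \<ge> r3" unfolding set by simp
    then show "Max {z::real. Rtdl t d l z = 0} > 1" using r3g by simp
  qed
  have part4: "d \<le> l * q1 t l \<longrightarrow> Min {z::real. Rtdl t d l z = 0} < -1"
  proof
    assume h: "d \<le> l * q1 t l"
    have tl: "\<tau> < 1/2"
    proof (rule ccontr)
      assume "\<not> \<tau> < 1/2"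
      then have "q1 t l = 0" unfolding q1eq by simp
      then show False using h assms by simp
    qed
    then have D: "D \<ge> 0" using E2 E3 h by linarith
    have "\<not> sqrt (P-W) < \<delta>" using h assms(1) tl unfolding q1eq by (simp add: d_eq)
    then have d2: "\<delta>^2 \<le> P - W" using sqrt_lt_iff[OF tp(2)] by simp
    have poly: "-2*\<tau>^3+24*\<tau>^2-37*\<tau>+16 > 0"
    proof -
      have "2*\<tau>^3 \<le> \<tau>^2"
      proof -
        have "\<tau>^2*(2*\<tau>) \<le> \<tau>^2*1" using tl tp by (intro mult_left_mono) auto
        then show ?thesis by (simp add: power3_eq_cube power2_eq_square algebra_simps)
      qed
      moreover have "23*\<tau>^2-37*\<tau>+16 = 23*(\<tau>-37/46)^2 + 103/92"
        by (simp add: power2_eq_square field_simps)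
      moreover have "23*(\<tau>-37/46)^2 \<ge> 0" by simp
      ultimately show ?thesis by linarith
    qed
    have WW: "7*\<tau> - 3*\<tau>^2/2 \<le> W"
    proof (cases "7*\<tau> - 3*\<tau>^2/2 \<le> 0")
      case True then show ?thesis using W0 by simp
    next
      case False
      have "W^2 - (7*\<tau> - 3*\<tau>^2/2)^2 = \<tau>*(-2*\<tau>^3+24*\<tau>^2-37*\<tau>+16)"
        unfolding W2 by (simp add: field_simps power2_eq_square power3_eq_cube)
      also have "\<dots> > 0" using poly tp by simp
      finally have "(7*\<tau> - 3*\<tau>^2/2)^2 \<le> W^2" by simp
      then show ?thesis using W0 by (rule power2_le_imp_le)
    qed
    have "P - W \<le> (1-\<tau>)^2" using WW unfolding P_def by (simp add: power2_eq_square algebra_simps)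
    then have "\<delta>^2 \<le> (1-\<tau>)^2" using d2 by simp
    moreover have "0 \<le> 1-\<tau>" using tl by simp
    ultimately have "\<delta> \<le> 1-\<tau>" by (rule power2_le_imp_le)
    then have bge: "b \<ge> \<tau>" by (simp add: b_def)
    have "\<tau>*(-1) < \<tau>*r" using tp r by (intro mult_strict_left_mono) auto
    then have "\<tau>*r > -\<tau>" by simp
    then have ppos: "p > 0" unfolding p_def using bge by simp
    obtain fin: "finite {z::real. Rtdl t d l z = 0}" and set: "{z::real. Rtdl t d l z = 0} = {r, r2, r3}"
      and le: "r2 \<le> r3" and pr: "r2*r3 > 1" and sm: "r2 + r3 = -p/\<tau>" using roots[OF D] by blast
    have "r2 + r3 < 0" using sm ppos tp by simp
    then have r2n: "r2 < 0" using le by simp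
    have r2g: "r2 < -1"
    proof (rule ccontr)
      assume "\<not> r2 < -1"
      then have r21: "-r2 \<le> 1" by simp
      have "r3 < 0" using pr r2n by (smt (verit) mult_nonpos_nonneg mult.commute)
      then have "(-r2)*(-r3) \<le> 1*1" using le r21 by (intro mult_mono) auto
      then show False using pr by simp
    qed
    have "Min {z::real. Rtdl t d l z = 0} \<le> r2" unfolding set by simp
    then show "Min {z::real. Rtdl t d l z = 0} < -1" using r2g by simp
  qed
  show ?thesis using part1 part2 part3 part4 by blast
qed

end
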